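(* Let $S$ be a modal left $E$-monoid, and let $E'\subseteq E(S)$ with a bijection $E\to E'$, $e\mapsto e'$, such that $e\sim_r e'$ for all $e\in E$. Then $1\in E'$, $S$ is a modal left $E'$-monoid, and its left $E'$-modal operation satisfies $s\cdot e'=(s\cdot e)'$ for all $s\in S$, $e\in E$. If $S$ is an inductive left $E$-monoid, then it is an inductive left $E'$-monoid and $(e\wedge f)'=e'\wedge f'$ for all $e,f\in E$.
   Context: For a semigroup $S$, $E(S)$ is its set of idempotents; for $e,f\in E(S)$, $e\le_r f$ iff $e=ef$, and $e\sim_r f$ iff $e\le_r f$ and $f\le_r e$. $E\subseteq E(S)$ is right pre-reduced if $e=ef$ and $f=fe$ imply $e=f$ for $e,f\in E$. Let $S$ be a monoid and $1\in E\subseteq E(S)$. $S$ is a modal left $E$-monoid if $E$ is right pre-reduced and (I1') for all $t\in S$, $e\in E$ there is $t\cdot e\in E$ such that for all $s\in S$: $ste=st$ iff $s(t\cdot e)=s$; the (necessarily unique) map $(t,e)\mapsto t\cdot e$ is the left $E$-modal operation. $S$ is an inductive left $E$-monoid if it is a modal left $E$-monoid, $(E,\le_r)$ is a meet-semilattice with meet $\wedge$, and (I2') for $s\in S$, $e,f\in E$: $se=sf=s$ implies $s(e\wedge f)=s$. *)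

theory Defs
  imports Main
begin

definition idempotents :: "'a::monoid_mult set" where
  "idempotents = {x. x * x = x}"

definition le_r :: "'a::monoid_mult \<Rightarrow> 'a \<Rightarrow> bool" where
  "le_r e f \<longleftrightarrow> e = e * f"

definition sim_r :: "'a::monoid_mult \<Rightarrow> 'a \<Rightarrow> bool" where
  "sim_r e f \<longleftrightarrow> le_r e f \<and> le_r f e"

definition right_pre_reduced :: "'a::monoid_mult set \<Rightarrow> bool" where
  "right_pre_reduced E \<longleftrightarrow> (\<forall>e\<in>E. \<forall>f\<in>E. e = e * f \<and> f = f * e \<longrightarrow> e = f)"

definition modal_witness :: "'a::monoid_mult set \<Rightarrow> 'a \<Rightarrow> 'a \<Rightarrow> 'a \<Rightarrow> bool" where
  "modal_witness E t e d \<longleftrightarrow> d \<in> E \<and> (\<forall>s. s * t * e = s * t \<longleftrightarrow> s * d = s)"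

definition modal_left_monoid :: "'a::monoid_mult set \<Rightarrow> bool" where
  "modal_left_monoid E \<longleftrightarrow> 1 \<in> E \<and> E \<subseteq> idempotents \<and> right_pre_reduced E \<and>
     (\<forall>t. \<forall>e\<in>E. \<exists>d. modal_witness E t e d)"

definition modal_op :: "'a::monoid_mult set \<Rightarrow> 'a \<Rightarrow> 'a \<Rightarrow> 'a" where
  "modal_op E t e = (THE d. modal_witness E t e d)"

definition is_meet :: "'a::monoid_mult set \<Rightarrow> 'a \<Rightarrow> 'a \<Rightarrow> 'a \<Rightarrow> bool" where
  "is_meet E e f m \<longleftrightarrow> m \<in> E \<and> le_r m e \<and> le_r m f \<and>
     (\<forall>g\<in>E. le_r g e \<and> le_r g f \<longrightarrow> le_r g m)"

definition meet :: "'a::monoid_mult set \<Rightarrow> 'a \<Rightarrow> 'a \<Rightarrow> 'a" where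
  "meet E e f = (THE m. is_meet E e f m)"

definition inductive_left_monoid :: "'a::monoid_mult set \<Rightarrow> bool" where
  "inductive_left_monoid E \<longleftrightarrow> modal_left_monoid E \<and>
     (\<forall>e\<in>E. \<forall>f\<in>E. \<exists>m. is_meet E e f m) \<and>
     (\<forall>s. \<forall>e\<in>E. \<forall>f\<in>E. s * e = s \<and> s * f = s \<longrightarrow> s * meet E e f = s)"

end

theory Submission
  imports Defs
begin

lemma key:
  fixes e :: "'a::monoid_mult"
  assumes "sim_r e e'"
  shows "s * e = s \<longleftrightarrow> s * e' = s"
proof
  have a: "e = e * e'" "e' = e' * e" using assms by (auto simp: sim_r_def le_r_def)
  { assume "s * e = s" then have "s * e' = s * e * e'" by simp
    also have "\<dots> = s" using a \<open>s * e = s\<close> by (metis mult.assoc)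
    finally show "s * e' = s" . }
  { assume "s * e' = s" then have "s * e = s * e' * e" by simp
    also have "\<dots> = s" using a \<open>s * e' = s\<close> by (metis mult.assoc)
    finally show "s * e = s" . }
qed

lemma witness_unique:
  assumes "E \<subseteq> idempotents" "right_pre_reduced E"
    "modal_witness E t e d" "modal_witness E t e d'"
  shows "d = d'"
proof -
  have dE: "d \<in> E" "d' \<in> E" using assms(3,4) by (auto simp: modal_witness_def)
  have i: "d * d = d" "d' * d' = d'" using dE assms(1) by (auto simp: idempotents_def)
  have "\<forall>s. s * d = s \<longleftrightarrow> s * d' = s" using assms(3,4) by (auto simp: modal_witness_def)
  then have "d * d' = d" "d' * d = d'" using i by auto
  then show ?thesis using assms(2) dE by (auto simp: right_pre_reduced_def)
qed

lemma modal_op_eq: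
  assumes "E \<subseteq> idempotents" "right_pre_reduced E" "modal_witness E t e d"
  shows "modal_op E t e = d"
  unfolding modal_op_def using witness_unique[OF assms(1,2)] assms(3) by blast

lemma meet_eq:
  assumes "right_pre_reduced E" "is_meet E e f m"
  shows "meet E e f = m"
proof -
  have "\<And>m'. is_meet E e f m' \<Longrightarrow> m' = m"
  proof -
    fix m' assume h: "is_meet E e f m'"
    then have "le_r m' m" "le_r m m'" using assms(2) by (auto simp: is_meet_def)
    then show "m' = m" using assms(1) h assms(2) by (auto simp: is_meet_def right_pre_reduced_def le_r_def)
  qed
  then show ?thesis unfolding meet_def using assms(2) by blast
qed

theorem proposition5p5:
  fixes E E' :: "'a::monoid_mult set" and b :: "'a \<Rightarrow> 'a"
  assumes "modal_left_monoid E"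
    and "E' \<subseteq> idempotents"
    and "bij_betw b E E'"
    and "\<forall>e\<in>E. sim_r e (b e)"
  shows "1 \<in> E' \<and> modal_left_monoid E' \<and>
         (\<forall>s. \<forall>e\<in>E. modal_op E' s (b e) = b (modal_op E s e)) \<and>
         (inductive_left_monoid E \<longrightarrow>
            inductive_left_monoid E' \<and>
            (\<forall>e\<in>E. \<forall>f\<in>E. meet E' (b e) (b f) = b (meet E e f)))"
proof -
  have E'img: "E' = b ` E" using assms(3) by (simp add: bij_betw_def)
  have 1: "1 \<in> E" "E \<subseteq> idempotents" "right_pre_reduced E"
    and W: "\<forall>t. \<forall>e\<in>E. \<exists>d. modal_witness E t e d"
    using assms(1) by (auto simp: modal_left_monoid_def)
  have K: "\<And>s e. e \<in> E \<Longrightarrow> s * e = s \<longleftrightarrow> s * b e = s" using key assms(4) by blast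
  have b1: "b 1 = 1" using K[OF 1(1), of 1] by simp
  have one: "1 \<in> E'" using b1 1(1) E'img by force
  have ler1: "\<And>x y. y \<in> E \<Longrightarrow> le_r x (b y) \<longleftrightarrow> le_r x y"
    using K unfolding le_r_def by metis
  have ler2: "\<And>x y. x \<in> E \<Longrightarrow> le_r (b x) y \<longleftrightarrow> le_r x y"
  proof -
    fix x y assume x: "x \<in> E"
    have a: "x = x * b x" "b x = b x * x" using assms(4) x by (auto simp: sim_r_def le_r_def)
    show "le_r (b x) y \<longleftrightarrow> le_r x y" unfolding le_r_def
      by (metis a mult.assoc)
  qed
  have rpr: "right_pre_reduced E'"
    unfolding right_pre_reduced_def
  proof (intro ballI impI)
    fix e' f' assume "e' \<in> E'" "f' \<in> E'" and h: "e' = e' * f' \<and> f' = f' * e'"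
    then obtain e f where ef: "e \<in> E" "f \<in> E" "e' = b e" "f' = b f" using E'img by auto
    have "le_r e f" "le_r f e" using h ef ler1 ler2 unfolding le_r_def[symmetric] by auto
    then have "e = f" using 1(3) ef unfolding right_pre_reduced_def le_r_def by auto
    then show "e' = f'" using ef by simp
  qed
  have Wb: "\<And>t e d. e \<in> E \<Longrightarrow> modal_witness E t e d \<Longrightarrow> modal_witness E' t (b e) (b d)"
  proof -
    fix t e d assume e: "e \<in> E" and w: "modal_witness E t e d"
    then have d: "d \<in> E" by (simp add: modal_witness_def)
    show "modal_witness E' t (b e) (b d)"
      unfolding modal_witness_def using w d e K E'img
      unfolding modal_witness_def by (metis image_eqI)
  qed
  have mod': "modal_left_monoid E'"
    unfolding modal_left_monoid_def
  proof (intro conjI allI ballI)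
    fix t e' assume "e' \<in> E'"
    then obtain e where "e \<in> E" "e' = b e" using E'img by auto
    then show "\<exists>d. modal_witness E' t e' d" using W Wb by blast
  qed (use one assms(2) rpr in auto)
  have op: "\<forall>s. \<forall>e\<in>E. modal_op E' s (b e) = b (modal_op E s e)"
  proof (intro allI ballI)
    fix s e assume e: "e \<in> E"
    then obtain d where d: "modal_witness E s e d" using W by blast
    have "modal_op E s e = d" using modal_op_eq[OF 1(2,3) d] .
    moreover have "modal_op E' s (b e) = b d" using modal_op_eq[OF assms(2) rpr Wb[OF e d]] .
    ultimately show "modal_op E' s (b e) = b (modal_op E s e)" by simp
  qed
  have mb: "\<And>e f m. e \<in> E \<Longrightarrow> f \<in> E \<Longrightarrow> is_meet E e f m \<Longrightarrow> is_meet E' (b e) (b f) (b m)"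
  proof -
    fix e f m assume ef: "e \<in> E" "f \<in> E" and im: "is_meet E e f m"
    then have m: "m \<in> E" by (simp add: is_meet_def)
    show "is_meet E' (b e) (b f) (b m)"
      unfolding is_meet_def
    proof (intro conjI ballI impI)
      show "b m \<in> E'" using m E'img by auto
      show "le_r (b m) (b e)" "le_r (b m) (b f)" using im ef m ler1 ler2 by (auto simp: is_meet_def)
      fix g assume "g \<in> E'" "le_r g (b e) \<and> le_r g (b f)"
      then obtain g0 where "g0 \<in> E" "g = b g0" "le_r g0 e" "le_r g0 f" using E'img ler1 ler2 ef by auto
      then show "le_r g (b m)" using im ler1 ler2 m by (auto simp: is_meet_def)
    qed
  qed
  have ind: "inductive_left_monoid E \<longrightarrow>
            inductive_left_monoid E' \<and>
            (\<forall>e\<in>E. \<forall>f\<in>E. meet E' (b e) (b f) = b (meet E e f))"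
  proof
    assume I: "inductive_left_monoid E"
    have ex: "\<forall>e\<in>E. \<forall>f\<in>E. \<exists>m. is_meet E e f m"
      and I2: "\<forall>s. \<forall>e\<in>E. \<forall>f\<in>E. s * e = s \<and> s * f = s \<longrightarrow> s * meet E e f = s"
      using I by (auto simp: inductive_left_monoid_def)
    have mm: "\<forall>e\<in>E. \<forall>f\<in>E. meet E' (b e) (b f) = b (meet E e f)"
    proof (intro ballI)
      fix e f assume ef: "e \<in> E" "f \<in> E"
      then obtain m where m: "is_meet E e f m" using ex by blast
      show "meet E' (b e) (b f) = b (meet E e f)"
        using meet_eq[OF 1(3) m] meet_eq[OF rpr mb[OF ef m]] by simp
    qed
    have "inductive_left_monoid E'"
      unfolding inductive_left_monoid_def
    proof (intro conjI ballI allI impI)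
      show "modal_left_monoid E'" by (rule mod')
      fix e' f' assume "e' \<in> E'" "f' \<in> E'"
      then obtain e f where ef: "e \<in> E" "f \<in> E" "e' = b e" "f' = b f" using E'img by auto
      show "\<exists>m. is_meet E' e' f' m" using ex ef mb by blast
      fix s assume "s * e' = s \<and> s * f' = s"
      then have "s * e = s" "s * f = s" using K ef by auto
      then have "s * meet E e f = s" using I2 ef by blast
      moreover have "meet E e f \<in> E" using ex ef meet_eq[OF 1(3)] by (metis is_meet_def)
      ultimately show "s * meet E' e' f' = s" using K mm ef by auto
    qed
    then show "inductive_left_monoid E' \<and> (\<forall>e\<in>E. \<forall>f\<in>E. meet E' (b e) (b f) = b (meet E e f))"
      using mm by blast
  qed
  show ?thesis using one mod' op ind by blast
qed

end
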